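(* Let $G$ be a connected solvable Lie group, $U=\mathbb C^n$, and let $\rho:G\to GL(n,\mathbb C)$ be a representation of $G$ on $U$. Then any complex linear subspace $V\subset U$ which is universal in $U$ is equal to $U$.
   Context: $V$ is universal in $U$ if for every $u\in U$ there exists $g\in G$ with $\rho(g)u\in V$. *)

theory Defs
  imports "HOL-Analysis.Analysis" "HOL-Algebra.Solvable_Groups"
begin

text \<open>The general linear group GL(n, k) realised on matrices indexed by a finite type 'n
  (so n = CARD('n)), as a HOL-Algebra monoid.\<close>
definition GL :: "('a::field ^'n^'n) monoid" where
  "GL = \<lparr>carrier = {A. invertible A}, mult = (**), one = mat 1\<rparr>"

definition topological_group :: "('g, 'b) monoid_scheme \<Rightarrow> 'g topology \<Rightarrow> bool" where
  "topological_group G T \<longleftrightarrow> group G \<and> topspace T = carrier G \<and>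
     continuous_map (prod_topology T T) T (\<lambda>(x, y). x \<otimes>\<^bsub>G\<^esub> y) \<and>
     continuous_map T T (\<lambda>x. inv\<^bsub>G\<^esub> x)"

definition universal_in ::
  "('g, 'b) monoid_scheme \<Rightarrow> ('g \<Rightarrow> 'a::semiring_1^'n^'n) \<Rightarrow> ('a^'n) set \<Rightarrow> ('a^'n) set \<Rightarrow> bool" where
  "universal_in G \<rho> U V \<longleftrightarrow> (\<forall>u\<in>U. \<exists>g\<in>carrier G. \<rho> g *v u \<in> V)"

end

theory Submission
  imports Defs "HOL-Computational_Algebra.Fundamental_Theorem_Algebra"
begin


definition evalv :: "complex^'n^'n \<Rightarrow> complex poly \<Rightarrow> complex^'n \<Rightarrow> complex^'n" where
  "evalv B p = fold_coeffs (\<lambda>a f v. a *s v + B *v f v) p (\<lambda>v. 0)"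

lemma evalv_0[simp]: "evalv B 0 v = 0"
  by (simp add: evalv_def)

lemma evalv_pCons[simp]: "evalv B (pCons a p) v = a *s v + B *v evalv B p v"
proof (cases "p = 0 \<and> a = 0")
  case True then show ?thesis by (simp add: evalv_def)
next
  case False
  then show ?thesis
    by (cases "p = 0") (auto simp: evalv_def)
qed

lemma evalv_add: "evalv B (p + q) v = evalv B p v + evalv B q v"
proof (induction p q rule: poly_induct2)
  case 0 then show ?case by simp
next
  case (pCons a p b q)
  then show ?case
    by (simp add: add_pCons vector_sadd_rdistrib matrix_vector_right_distrib algebra_simps)
qed

lemma evalv_smult: "evalv B (smult c p) v = c *s evalv B p v"
  by (induction p) (simp_all add: vec.scale vec.scale_right_distrib vec.scale_scale)

lemma evalv_diff: "evalv B (p - q) v = evalv B p v - evalv B q v"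
  using evalv_add[of B "p - q" q v] by simp

lemma evalv_mult: "evalv B (p * q) v = evalv B p (evalv B q v)"
  by (induction p) (simp_all add: evalv_add evalv_smult)

lemma evalv_vadd: "evalv B p (x + y) = evalv B p x + evalv B p y"
  by (induction p) (simp_all add: vec.scale_right_distrib matrix_vector_right_distrib algebra_simps)

lemma evalv_vscale: "evalv B p (c *s x) = c *s evalv B p x"
  by (induction p) (simp_all add: vec.scale vec.scale_right_distrib vec.scale_left_commute)

lemma evalv_vzero[simp]: "evalv B p 0 = 0"
  by (induction p) simp_all

lemma evalv_vsum: "evalv B p (sum f S) = (\<Sum>i\<in>S. evalv B p (f i))"
  by (induction S rule: infinite_finite_induct) (simp_all add: evalv_vadd)

lemma evalv_psum: "evalv B (sum f S) v = (\<Sum>i\<in>S. evalv B (f i) v)"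
  by (induction S rule: infinite_finite_induct) (simp_all add: evalv_add)

lemma evalv_const: "evalv B [:c:] v = c *s v"
  by simp

lemma evalv_lin: "evalv B [:-r, 1:] v = B *v v - r *s v"
  by (simp add: vec.scale_minus_left)

lemma evalv_monom: "evalv B (monom a k) v = a *s (((*v) B) ^^ k) v"
  by (induction k) (simp_all add: monom_Suc monom_0 vec.scale)

definition invsub :: "complex^'n^'n \<Rightarrow> (complex^'n) set \<Rightarrow> bool" where
  "invsub B U \<longleftrightarrow> (\<forall>u\<in>U. B *v u \<in> U)"

lemma evalv_in:
  assumes "vec.subspace U" "invsub B U" "v \<in> U"
  shows "evalv B p v \<in> U"
  using assms
  by (induction p) (auto simp: invsub_def vec.subspace_0 intro!: vec.subspace_add vec.subspace_scale)

lemma evalv_mod: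
  assumes "vec.subspace Z" "invsub B Z" "B *v x - c *s x \<in> Z"
  shows "evalv B p x - poly p c *s x \<in> Z"
proof (induction p)
  case 0 then show ?case using assms(1) vec.subspace_0 by simp
next
  case (pCons a p)
  define z where "z = evalv B p x - poly p c *s x"
  have ev: "evalv B p x = poly p c *s x + z" by (simp add: z_def)
  have "evalv B (pCons a p) x - poly (pCons a p) c *s x
        = poly p c *s (B *v x - c *s x) + B *v z"
    by (simp add: ev vec.scale matrix_vector_right_distrib vec.scale_scale algebra_simps
        vector_sadd_rdistrib vec.scale_right_diff_distrib)
  also have "\<dots> \<in> Z"
  proof (rule vec.subspace_add[OF assms(1)])
    show "poly p c *s (B *v x - c *s x) \<in> Z" using assms(1,3) by (rule vec.subspace_scale)
    show "B *v z \<in> Z" using pCons assms(2) by (simp add: z_def invsub_def)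
  qed
  finally show ?case .
qed

lemma exists_ann_vec: "\<exists>p. p \<noteq> 0 \<and> evalv (B::complex^'n^'n) p u = 0"
proof -
  define f where "f = (\<lambda>i. (((*v) B) ^^ i) u)"
  define N where "N = CARD('n)"
  show ?thesis
  proof (cases "inj_on f {0..N}")
    case False
    then obtain i j where ij: "i \<noteq> j" "f i = f j" unfolding inj_on_def by auto
    have "\<exists>i j. i < j \<and> f i = f j"
    proof (cases "i < j")
      case True then show ?thesis using ij by auto
    next
      case False then have "j < i" using ij by auto
      then show ?thesis using ij by metis
    qed
    then obtain i j where ij: "i < j" "f i = f j" by blast
    define p where "p = monom (1::complex) j - monom 1 i"
    have "coeff p j = 1" using ij by (simp add: p_def coeff_monom)
    then have "p \<noteq> 0" by auto
    moreover have "evalv B p u = 0"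
      using ij by (simp add: p_def evalv_diff evalv_monom f_def)
    ultimately show ?thesis by blast
  next
    case True
    define S where "S = f ` {0..N}"
    have fin: "finite S" by (simp add: S_def)
    have cardS: "card S = N + 1" using True by (simp add: S_def card_image)
    have "vec.dependent S"
    proof (rule ccontr)
      assume "vec.independent S"
      then have "card S \<le> vec.dim S" using vec.independent_bound_general by blast
      also have "\<dots> \<le> N" using vec.dim_subset_UNIV[of S] by (simp add: vec.dimension_def card_cart_basis N_def)
      finally show False using cardS by simp
    qed
    then obtain c where c: "\<exists>v\<in>S. c v \<noteq> 0" "(\<Sum>v\<in>S. c v *s v) = 0"
      using vec.dependent_finite[OF fin] by blast
    define p where "p = (\<Sum>i\<in>{0..N}. monom (c (f i)) i)"
    from c(1) obtain i0 where i0: "i0 \<in> {0..N}" "c (f i0) \<noteq> 0" by (auto simp: S_def)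
    have "coeff p i0 = (\<Sum>i\<in>{0..N}. if i = i0 then c (f i) else 0)"
      by (simp add: p_def coeff_sum coeff_monom)
    also have "\<dots> = c (f i0)" using i0 by simp
    finally have "p \<noteq> 0" using i0 by auto
    have "evalv B p u = (\<Sum>i\<in>{0..N}. c (f i) *s f i)"
      by (simp add: p_def evalv_psum evalv_monom f_def)
    also have "\<dots> = (\<Sum>v\<in>S. c v *s v)"
      unfolding S_def using sum.reindex[OF True, of "\<lambda>v. c v *s v"] by simp
    also have "\<dots> = 0" by (rule c(2))
    finally show ?thesis using \<open>p \<noteq> 0\<close> by blast
  qed
qed

lemma eigen_mod_aux:
  fixes B :: "complex^'n^'n"
  assumes Z: "vec.subspace Z" and U: "vec.subspace U" "invsub B U" and u: "u \<in> U" "u \<notin> Z"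
  shows "p \<noteq> 0 \<Longrightarrow> evalv B p u \<in> Z \<Longrightarrow> \<exists>c w. w \<in> U \<and> w \<notin> Z \<and> B *v w - c *s w \<in> Z"
proof (induction "degree p" arbitrary: p rule: less_induct)
  case less
  show ?case
  proof (cases "degree p = 0")
    case True
    then obtain a where a: "p = [:a:]" by (meson degree_eq_zeroE)
    with less.prems have "a \<noteq> 0" by auto
    have "a *s u \<in> Z" using less.prems a by simp
    then have "(1/a) *s (a *s u) \<in> Z" by (rule vec.subspace_scale[OF Z])
    then have "u \<in> Z" using \<open>a \<noteq> 0\<close> by (simp add: vec.scale_scale)
    then show ?thesis using u by blast
  next
    case False
    then have "\<not> constant (poly p)" by (simp add: constant_degree)
    then obtain r where "poly p r = 0" using fundamental_theorem_of_algebra by blast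
    then obtain q where q: "p = [:-r, 1:] * q" using poly_eq_0_iff_dvd by (metis dvdE)
    have q0: "q \<noteq> 0" using q less.prems by auto
    have "degree p = degree [:-r, 1:] + degree q" unfolding q
      by (rule degree_mult_eq) (use q0 in auto)
    then have dq: "degree q < degree p" by simp
    have ev: "evalv B p u = B *v (evalv B q u) - r *s evalv B q u"
      unfolding q evalv_mult by (rule evalv_lin)
    show ?thesis
    proof (cases "evalv B q u \<in> Z")
      case True
      then show ?thesis using less.hyps[OF dq q0] by blast
    next
      case False
      moreover have "evalv B q u \<in> U" using evalv_in[OF U u(1)] .
      ultimately show ?thesis using less.prems ev by metis
    qed
  qed
qed

lemma eigen_mod:
  fixes B :: "complex^'n^'n"
  assumes "vec.subspace Z" "vec.subspace U" "invsub B U" "u \<in> U" "u \<notin> Z"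
  shows "\<exists>c w. w \<in> U \<and> w \<notin> Z \<and> B *v w - c *s w \<in> Z"
proof -
  obtain p where "p \<noteq> 0" "evalv B p u = 0" using exists_ann_vec by blast
  then show ?thesis using eigen_mod_aux[OF assms, of p] vec.subspace_0[OF assms(1)] by auto
qed

lemma exists_ann: "\<exists>p. p \<noteq> 0 \<and> (\<forall>v. evalv (B::complex^'n^'n) p v = 0)"
proof -
  have "\<forall>i. \<exists>p. p \<noteq> 0 \<and> evalv B p (axis i 1) = 0" using exists_ann_vec by blast
  then obtain P where P: "\<And>i. P i \<noteq> 0" "\<And>i. evalv B (P i) (axis i 1) = 0" by metis
  define p where "p = (\<Prod>i\<in>UNIV. P i)"
  have "p \<noteq> 0" using P(1) by (simp add: p_def)
  moreover have ax: "evalv B p (axis i 1) = 0" for i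
  proof -
    have "p = (\<Prod>j\<in>UNIV - {i}. P j) * P i"
      unfolding p_def by (metis finite UNIV_I mult.commute prod.remove)
    then show ?thesis by (simp add: evalv_mult P(2))
  qed
  have "evalv B p v = 0" for v
  proof -
    have "evalv B p v = evalv B p (\<Sum>i\<in>UNIV. v $ i *s axis i 1)" by (simp add: basis_expansion)
    also have "\<dots> = 0" by (simp add: evalv_vsum evalv_vscale ax)
    finally show ?thesis .
  qed
  ultimately show ?thesis by blast
qed

lemma eigen_mod_root:
  assumes "vec.subspace Z" "invsub B Z" "B *v x - c *s x \<in> Z" "x \<notin> Z"
    and "\<forall>v. evalv B p v = 0"
  shows "poly p c = 0"
proof (rule ccontr)
  assume nz: "poly p c \<noteq> 0"
  have "evalv B p x - poly p c *s x \<in> Z" using evalv_mod[OF assms(1-3)] .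
  then have "poly p c *s x \<in> Z" using assms(5) vec.subspace_neg[OF assms(1)] by fastforce
  then have "(1 / poly p c) *s (poly p c *s x) \<in> Z" by (rule vec.subspace_scale[OF assms(1)])
  then show False using nz assms(4) by (simp add: vec.scale_scale)
qed

lemma functional:
  fixes Z :: "(complex^'n) set"
  assumes Z: "vec.subspace Z" and w: "w \<notin> Z"
  shows "\<exists>d. (\<forall>z\<in>Z. (\<Sum>i\<in>UNIV. z $ i * d i) = 0) \<and> (\<Sum>i\<in>UNIV. w $ i * d i) = 1"
proof -
  obtain B where B: "B \<subseteq> Z" "vec.independent B" "Z \<subseteq> vec.span B" "card B = vec.dim Z"
    by (rule vec.basis_exists[of Z])
  have spB: "vec.span B \<subseteq> Z" using vec.span_minimal[OF B(1) Z] .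
  have wB: "w \<notin> vec.span B" using spB w by blast
  define I where "I = insert w B"
  have indI: "vec.independent I" unfolding I_def using vec.independent_insertI[OF wB B(2)] .
  define L where "L = vec.construct I (\<lambda>b. if b = w then w else 0)"
  have lin: "Vector_Spaces.linear (*s) (*s) L" unfolding L_def using vec.linear_construct[OF indI] .
  have wI: "w \<in> I" by (simp add: I_def)
  have Lw: "L w = w" unfolding L_def using vec.construct_basis[OF indI wI, of "\<lambda>b. if b = w then w else 0"] by simp
  have LB: "L b = 0" if "b \<in> B" for b
  proof -
    have "b \<noteq> w" using that B(1) w by blast
    have bI: "b \<in> I" using that by (simp add: I_def)
    show ?thesis unfolding L_def using vec.construct_basis[OF indI bI, of "\<lambda>b. if b = w then w else 0"] \<open>b \<noteq> w\<close> by simp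
  qed
  have LZ: "L z = 0" if "z \<in> Z" for z
    using vec.linear_eq_0_on_span[OF lin LB] that B(3) by blast
  have "w \<noteq> 0" using w vec.subspace_0[OF Z] by blast
  then obtain j where j: "w $ j \<noteq> 0" using vec_eq_iff[of w 0] by auto
  define d where "d i = L (axis i 1) $ j / w $ j" for i
  have Lx: "(\<Sum>i\<in>UNIV. x $ i * d i) = L x $ j / w $ j" for x
  proof -
    have "L x = L (\<Sum>i\<in>UNIV. x $ i *s axis i 1)" by (simp only: basis_expansion)
    also have "\<dots> = (\<Sum>i\<in>UNIV. x $ i *s L (axis i 1))"
      by (simp add: vec.linear_sum[OF lin] vec.linear_scale[OF lin])
    finally have "L x $ j = (\<Sum>i\<in>UNIV. x $ i * L (axis i 1) $ j)"
      by (simp add: sum_component vector_smult_component)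
    then show ?thesis by (simp add: d_def sum_divide_distrib)
  qed
  show ?thesis
  proof (intro exI conjI ballI)
    fix z assume "z \<in> Z" then show "(\<Sum>i\<in>UNIV. z $ i * d i) = 0" by (simp add: Lx LZ)
  next
    show "(\<Sum>i\<in>UNIV. w $ i * d i) = 1" using j by (simp add: Lx Lw)
  qed
qed




locale LKctx = group G for G :: "('g, 'b) monoid_scheme" (structure) +
  fixes T :: "'g topology" and \<rho> :: "'g \<Rightarrow> complex^'n^'n"
  assumes tg: "topological_group G T" and hom: "\<rho> \<in> hom G GL"
    and cont: "continuous_map T euclidean \<rho>"
begin

lemma topT: "topspace T = carrier G" using tg by (simp add: topological_group_def)

lemma cts_mult:
  assumes "continuous_map X T f" "continuous_map X T g"
  shows "continuous_map X T (\<lambda>x. f x \<otimes> g x)"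
proof -
  have m: "continuous_map (prod_topology T T) T (\<lambda>(x, y). x \<otimes> y)"
    using tg by (simp add: topological_group_def)
  have "continuous_map X T ((\<lambda>(x, y). x \<otimes> y) \<circ> (\<lambda>x. (f x, g x)))"
    by (rule continuous_map_compose[OF continuous_map_pairedI[OF assms] m])
  then show ?thesis by (simp add: o_def)
qed

lemma cts_inv:
  assumes "continuous_map X T f"
  shows "continuous_map X T (\<lambda>x. inv (f x))"
proof -
  have m: "continuous_map T T (\<lambda>x. inv x)"
    using tg by (simp add: topological_group_def)
  have "continuous_map X T ((\<lambda>x. inv x) \<circ> f)"
    by (rule continuous_map_compose[OF assms m])
  then show ?thesis by (simp add: o_def)
qed

lemma cts_const: "c \<in> carrier G \<Longrightarrow> continuous_map X T (\<lambda>x. c)"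
  by (simp add: topT)

lemma rho_mult: "x \<in> carrier G \<Longrightarrow> y \<in> carrier G \<Longrightarrow> \<rho> (x \<otimes> y) = \<rho> x ** \<rho> y"
  using hom by (simp add: hom_def GL_def)

lemma rho_invertible: "x \<in> carrier G \<Longrightarrow> invertible (\<rho> x)"
  using hom by (auto simp: hom_def GL_def Pi_def)

lemma rho_one: "\<rho> \<one> = mat 1"
proof -
  obtain A' where A': "A' ** \<rho> \<one> = mat 1"
    using rho_invertible[of \<one>] by (auto simp: invertible_def)
  have "\<rho> \<one> = \<rho> \<one> ** \<rho> \<one>" using rho_mult[of \<one> \<one>] by simp
  then have "A' ** \<rho> \<one> = A' ** (\<rho> \<one> ** \<rho> \<one>)" by simp
  then show ?thesis using A' by (simp add: matrix_mul_assoc matrix_mul_lid)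
qed

lemma act: "x \<in> carrier G \<Longrightarrow> y \<in> carrier G \<Longrightarrow> \<rho> (x \<otimes> y) *v v = \<rho> x *v (\<rho> y *v v)"
  by (simp add: rho_mult matrix_vector_mul_assoc)

lemma act_one[simp]: "\<rho> \<one> *v v = v"
  by (simp add: rho_one)

lemma act_inv1: "x \<in> carrier G \<Longrightarrow> \<rho> (inv x) *v (\<rho> x *v v) = v"
  by (simp add: act[symmetric])

lemma act_inv2: "x \<in> carrier G \<Longrightarrow> \<rho> x *v (\<rho> (inv x) *v v) = v"
  by (simp add: act[symmetric])

lemma cts_fun:
  assumes "continuous_map T T f"
  shows "continuous_map T euclidean (\<lambda>a. (\<Sum>i\<in>UNIV. (\<rho> (f a) *v w) $ i * d i))"
proof -
  have c1: "continuous_map T euclidean (\<rho> \<circ> f)"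
    by (rule continuous_map_compose[OF assms cont])
  have "continuous_on UNIV (\<lambda>A::complex^'n^'n. (\<Sum>i\<in>UNIV. (A *v w) $ i * d i))"
    unfolding matrix_vector_mult_def by (simp, intro continuous_intros)
  then have c2: "continuous_map euclidean euclidean (\<lambda>A::complex^'n^'n. (\<Sum>i\<in>UNIV. (A *v w) $ i * d i))"
    by (simp add: continuous_map_iff_continuous2)
  show ?thesis using continuous_map_compose[OF c1 c2] by (simp add: o_def)
qed

lemma const_on:
  fixes \<phi> :: "'g \<Rightarrow> complex"
  assumes "connectedin T K" "continuous_map T euclidean \<phi>" "\<forall>a\<in>K. \<phi> a \<in> F" "finite F"
    "a0 \<in> K" "a \<in> K"
  shows "\<phi> a = \<phi> a0"
proof -
  have "connected (\<phi> ` K)"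
    using connectedin_continuous_map_image[OF assms(2,1)] by (simp add: connectedin_iff_connected)
  moreover have "finite (\<phi> ` K)" using assms(3,4) by (meson finite_subset image_subsetI)
  ultimately obtain c where "\<phi> ` K = {c}" using assms(5) connected_finite_iff_sing by blast
  then show ?thesis using assms(5,6) by (metis imageI singletonD)
qed

lemma conn_derived:
  assumes K: "subgroup K G" "connectedin T K"
  shows "connectedin T (derived G K)"
proof -
  define c where "c = (\<lambda>p. fst p \<otimes> snd p \<otimes> inv (fst p) \<otimes> inv (snd p))"
  have cc: "continuous_map (prod_topology T T) T c"
    unfolding c_def
    by (intro cts_mult cts_inv continuous_map_fst continuous_map_snd)
  have Sdef: "derived_set G K = c ` (K \<times> K)"
    unfolding c_def by force
  have KK: "connectedin (prod_topology T T) (K \<times> K)"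
    using K(2) by (simp add: connectedin_Times)
  have Sconn: "connectedin T (derived_set G K)"
    unfolding Sdef by (rule connectedin_continuous_map_image[OF cc KK])
  define H where "H = derived G K"
  have Hsub: "subgroup H G" unfolding H_def
    using derived_is_subgroup subgroup.subset[OF K(1)] by blast
  have SH: "derived_set G K \<subseteq> H" unfolding H_def derived_def by (auto intro: generate.incl)
  have oneS: "\<one> \<in> derived_set G K"
  proof -
    have "\<one> \<in> K" using K(1) subgroup.one_closed by blast
    then show ?thesis by force
  qed
  define C where "C = connected_component_of_set (subtopology T H) \<one>"
  have Cconn: "connectedin (subtopology T H) C" unfolding C_def by (rule connectedin_connected_component_of)
  have CH: "C \<subseteq> H" using connected_component_of_subset_topspace[of "subtopology T H" \<one>]
    by (auto simp: C_def)
  have HG: "H \<subseteq> carrier G" using Hsub subgroup.subset by blast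
  have CG: "C \<subseteq> carrier G" using CH HG by blast
  have maxl: "S \<subseteq> C" if "connectedin T S" "S \<subseteq> H" "\<one> \<in> S" for S
    unfolding C_def using that by (intro connected_component_of_maximal) (auto simp: connectedin_subtopology)
  have SC: "derived_set G K \<subseteq> C" using maxl[OF Sconn SH oneS] .
  have one: "\<one> \<in> C" using SC oneS by blast
  have CT: "connectedin T C" using Cconn by (simp add: connectedin_subtopology)
  have "subgroup C G"
  proof (rule subgroupI)
    show "C \<subseteq> carrier G" by (rule CG)
    show "C \<noteq> {}" using one by blast
  next
    fix a assume a: "a \<in> C"
    have ci: "continuous_map T T (\<lambda>x. inv x)" using cts_inv[OF continuous_map_id] by (simp add: id_def)
    have "connectedin T ((\<lambda>x. inv x) ` C)"
      by (rule connectedin_continuous_map_image[OF ci CT])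
    moreover have "(\<lambda>x. inv x) ` C \<subseteq> H" using CH Hsub by (auto intro: subgroup.m_inv_closed)
    moreover have "\<one> \<in> (\<lambda>x. inv x) ` C" using one by (metis image_eqI inv_one)
    ultimately have "(\<lambda>x. inv x) ` C \<subseteq> C" by (rule maxl)
    then show "inv a \<in> C" using a by blast
  next
    fix a b assume a: "a \<in> C" and b: "b \<in> C"
    have aG: "a \<in> carrier G" using a CG by blast
    have cm: "continuous_map T T (\<lambda>x. a \<otimes> x)"
      using cts_mult[OF cts_const[OF aG] continuous_map_id] by (simp add: id_def)
    have c1: "connectedin T ((\<lambda>x. a \<otimes> x) ` C)"
      by (rule connectedin_continuous_map_image[OF cm CT])
    have "a \<in> (\<lambda>x. a \<otimes> x) ` C" using one aG by (metis image_eqI r_one)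
    then have "connectedin T ((\<lambda>x. a \<otimes> x) ` C \<union> C)"
      using a by (intro connectedin_Un[OF c1 CT]) blast
    moreover have "(\<lambda>x. a \<otimes> x) ` C \<union> C \<subseteq> H" using CH Hsub a by (auto intro: subgroup.m_closed)
    moreover have "\<one> \<in> (\<lambda>x. a \<otimes> x) ` C \<union> C" using one by blast
    ultimately have "(\<lambda>x. a \<otimes> x) ` C \<union> C \<subseteq> C" by (rule maxl)
    then show "a \<otimes> b \<in> C" using b by blast
  qed
  then have "H \<subseteq> C" unfolding H_def derived_def using generate_subgroup_incl[OF SC] by blast
  then have "C = H" using CH by blast
  then show ?thesis using CT H_def by simp
qed

lemma conj_derived:
  assumes K: "subgroup K G" and a: "a \<in> K" and h: "h \<in> derived G K"
  shows "inv a \<otimes> h \<otimes> a \<in> derived G K"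
proof -
  have "inv\<^bsub>G\<lparr>carrier := K\<rparr>\<^esub> a \<otimes> h \<otimes> a \<in> derived G K"
    using normal.inv_op_closed1[OF derived_subgroup_is_normal[OF K], of a h] a h by simp
  then show ?thesis using m_inv_consistent[OF K a] by simp
qed

end



context LKctx begin

lemma step3:
  assumes K: "subgroup K G" "connectedin T K"
    and chi: "continuous_map T euclidean ka"
    and Z: "vec.subspace Z" "\<forall>k\<in>K. \<forall>z\<in>Z. \<rho> k *v z \<in> Z"
  shows "vec.subspace U \<Longrightarrow> Z \<subseteq> U \<Longrightarrow> Z \<noteq> U \<Longrightarrow> (\<forall>k\<in>K. \<forall>u\<in>U. \<rho> k *v u \<in> U) \<Longrightarrow>
    (\<forall>a\<in>K. \<forall>b\<in>K. \<forall>u\<in>U. \<rho> (a \<otimes> b \<otimes> inv a \<otimes> inv b) *v u - ka (a \<otimes> b \<otimes> inv a \<otimes> inv b) *s u \<in> Z) \<Longrightarrow>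
    \<exists>w\<in>U. w \<notin> Z \<and> (\<forall>k\<in>K. \<exists>c. \<rho> k *v w - c *s w \<in> Z)"
proof (induction "vec.dim U" arbitrary: U rule: less_induct)
  case less
  have KG: "K \<subseteq> carrier G" using K(1) subgroup.subset by blast
  obtain u0 where u0: "u0 \<in> U" "u0 \<notin> Z" using less.prems(2,3) by blast
  show ?case
  proof (cases "\<forall>g\<in>K. \<exists>c. \<forall>u\<in>U. \<rho> g *v u - c *s u \<in> Z")
    case True
    then show ?thesis using u0 by blast
  next
    case False
    then obtain g where g: "g \<in> K" "\<And>c. \<exists>u\<in>U. \<rho> g *v u - c *s u \<notin> Z" by blast
    have gG: "g \<in> carrier G" using g KG by blast
    have invU: "invsub (\<rho> g) U" using less.prems(4) g by (simp add: invsub_def)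
    have invZ: "invsub (\<rho> g) Z" using Z(2) g by (simp add: invsub_def)
    obtain lam w0 where w0: "w0 \<in> U" "w0 \<notin> Z" "\<rho> g *v w0 - lam *s w0 \<in> Z"
      using eigen_mod[OF Z(1) less.prems(1) invU u0] by blast
    define E where "E = {u \<in> U. \<rho> g *v u - lam *s u \<in> Z}"
    have Esub: "vec.subspace E"
      unfolding vec.subspace_def
    proof (intro conjI ballI allI)
      show "0 \<in> E" using vec.subspace_0[OF less.prems(1)] vec.subspace_0[OF Z(1)] by (simp add: E_def)
    next
      fix x y assume "x \<in> E" "y \<in> E"
      then have x: "x \<in> U" "\<rho> g *v x - lam *s x \<in> Z" and y: "y \<in> U" "\<rho> g *v y - lam *s y \<in> Z"
        by (auto simp: E_def)
      have eq: "\<rho> g *v (x + y) - lam *s (x + y) = (\<rho> g *v x - lam *s x) + (\<rho> g *v y - lam *s y)"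
        by (simp add: matrix_vector_right_distrib vec.scale_right_distrib algebra_simps)
      have "(\<rho> g *v x - lam *s x) + (\<rho> g *v y - lam *s y) \<in> Z"
        using x(2) y(2) by (rule vec.subspace_add[OF Z(1)])
      then have "\<rho> g *v (x + y) - lam *s (x + y) \<in> Z" unfolding eq .
      moreover have "x + y \<in> U" using x(1) y(1) by (rule vec.subspace_add[OF less.prems(1)])
      ultimately show "x + y \<in> E" unfolding E_def by blast
    next
      fix c x assume "x \<in> E"
      then have x: "x \<in> U" "\<rho> g *v x - lam *s x \<in> Z" by (auto simp: E_def)
      have eq: "\<rho> g *v (c *s x) - lam *s (c *s x) = c *s (\<rho> g *v x - lam *s x)"
        by (simp add: vec.scale vec.scale_right_diff_distrib vec.scale_left_commute)
      have "c *s (\<rho> g *v x - lam *s x) \<in> Z" using x(2) by (rule vec.subspace_scale[OF Z(1)])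
      then have "\<rho> g *v (c *s x) - lam *s (c *s x) \<in> Z" unfolding eq .
      moreover have "c *s x \<in> U" using x(1) by (rule vec.subspace_scale[OF less.prems(1)])
      ultimately show "c *s x \<in> E" unfolding E_def by blast
    qed
    have ZE: "Z \<subseteq> E"
    proof
      fix z assume z: "z \<in> Z"
      have "\<rho> g *v z - lam *s z \<in> Z"
        using z invZ vec.subspace_diff[OF Z(1)] vec.subspace_scale[OF Z(1)] by (simp add: invsub_def)
      then show "z \<in> E" using z less.prems(2) by (auto simp: E_def)
    qed
    have EU: "E \<subseteq> U" by (auto simp: E_def)
    have EneU: "E \<noteq> U" using g(2)[of lam] by (auto simp: E_def)
    have ZneE: "Z \<noteq> E" using w0 by (auto simp: E_def)
    have dimE: "vec.dim E < vec.dim U"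
    proof -
      have eqE: "vec.span E = E" using Esub by (simp only: vec.span_eq_iff)
      have eqU: "vec.span U = U" using less.prems(1) by (simp only: vec.span_eq_iff)
      have "E \<subset> U" using EU EneU by blast
      then have "vec.span E \<subset> vec.span U" by (simp only: eqE eqU)
      then show ?thesis by (rule vec.dim_psubset)
    qed
    have ka1: "ka \<one> = 1"
    proof (rule ccontr)
      assume ne: "ka \<one> \<noteq> 1"
      have "\<one> \<in> K" using K(1) subgroup.one_closed by blast
      then have "\<rho> \<one> *v w0 - ka \<one> *s w0 \<in> Z" using less.prems(5) w0(1)
        by (metis inv_one r_one one_closed)
      then have "(1 - ka \<one>) *s w0 \<in> Z" by (simp add: vec.scale_left_diff_distrib)
      then have "(1 / (1 - ka \<one>)) *s ((1 - ka \<one>) *s w0) \<in> Z" by (rule vec.subspace_scale[OF Z(1)])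
      moreover have "(1 / (1 - ka \<one>)) * (1 - ka \<one>) = 1" using ne by simp
      ultimately have "w0 \<in> Z" by (simp only: vec.scale_scale vec.scale_one)
      then show False using w0(2) by blast
    qed
    define h where "h a = inv g \<otimes> inv a \<otimes> g \<otimes> a" for a
    define mu where "mu a = lam * ka (h a)" for a
    have key: "\<rho> g *v (\<rho> a *v u) - mu a *s (\<rho> a *v u) \<in> Z" if a: "a \<in> K" and u: "u \<in> E" for a u
    proof -
      have aG: "a \<in> carrier G" using a KG by blast
      have hG: "h a \<in> carrier G" using aG gG by (simp add: h_def)
      have c1: "a \<otimes> g \<otimes> inv g = a" using aG gG by (simp add: m_assoc)
      have grp: "a \<otimes> g \<otimes> h a = g \<otimes> a" using aG gG by (simp add: h_def m_assoc[symmetric] c1)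
      have rel: "\<rho> a *v (\<rho> g *v (\<rho> (h a) *v u)) = \<rho> g *v (\<rho> a *v u)"
      proof -
        have "\<rho> a *v (\<rho> g *v (\<rho> (h a) *v u)) = \<rho> (a \<otimes> g \<otimes> h a) *v u"
          using aG gG hG by (simp add: act)
        also have "\<dots> = \<rho> (g \<otimes> a) *v u" by (simp add: grp)
        also have "\<dots> = \<rho> g *v (\<rho> a *v u)" using aG gG by (simp add: act)
        finally show ?thesis .
      qed
      have uU: "u \<in> U" and z2: "\<rho> g *v u - lam *s u \<in> Z" using u by (auto simp: E_def)
      have hcomm: "h a = inv g \<otimes> inv a \<otimes> inv (inv g) \<otimes> inv (inv a)" using aG gG by (simp add: h_def)
      have z1: "\<rho> (h a) *v u - ka (h a) *s u \<in> Z"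
        using less.prems(5) g(1) a uU K(1) hcomm by (metis subgroup.m_inv_closed)
      have eq: "\<rho> g *v (\<rho> a *v u) - mu a *s (\<rho> a *v u)
          = \<rho> a *v (ka (h a) *s (\<rho> g *v u - lam *s u) + \<rho> g *v (\<rho> (h a) *v u - ka (h a) *s u))"
        by (simp add: rel[symmetric] mu_def vec.diff vec.add vec.scale vec.scale_right_diff_distrib
            vec.scale_scale algebra_simps)
      have "ka (h a) *s (\<rho> g *v u - lam *s u) + \<rho> g *v (\<rho> (h a) *v u - ka (h a) *s u) \<in> Z"
      proof (rule vec.subspace_add[OF Z(1)])
        show "ka (h a) *s (\<rho> g *v u - lam *s u) \<in> Z" by (rule vec.subspace_scale[OF Z(1) z2])
        show "\<rho> g *v (\<rho> (h a) *v u - ka (h a) *s u) \<in> Z" using invZ z1 unfolding invsub_def by blast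
      qed
      then show ?thesis unfolding eq using Z(2) a by blast
    qed
    obtain P where P: "P \<noteq> 0" "\<forall>v. evalv (\<rho> g) P v = 0" using exists_ann by blast
    have mu_root: "mu a \<in> {c. poly P c = 0}" if a: "a \<in> K" for a
    proof -
      have aG: "a \<in> carrier G" using a KG by blast
      have "inv a \<in> K" by (rule subgroup.m_inv_closed[OF K(1) a])
      have nz: "\<rho> a *v w0 \<notin> Z"
      proof
        assume "\<rho> a *v w0 \<in> Z"
        then have "\<rho> (inv a) *v (\<rho> a *v w0) \<in> Z" using Z(2) \<open>inv a \<in> K\<close> by blast
        then show False using act_inv1[OF aG] w0(2) by simp
      qed
      have "w0 \<in> E" using w0 by (simp add: E_def)
      show ?thesis using eigen_mod_root[OF Z(1) invZ key[OF a \<open>w0 \<in> E\<close>] nz P(2)] by simp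
    qed
    have mu_cont: "continuous_map T euclidean mu"
    proof -
      have c1: "continuous_map T T h" unfolding h_def
        by (intro cts_mult cts_inv cts_const continuous_map_id[unfolded id_def] gG inv_closed)
      have c2: "continuous_map T euclidean (ka \<circ> h)" by (rule continuous_map_compose[OF c1 chi])
      have c3: "continuous_map euclidean euclidean (\<lambda>z::complex. lam * z)"
        by (simp add: continuous_map_iff_continuous2 continuous_intros)
      have "mu = (\<lambda>x. lam * ka (h x))" by (simp add: mu_def fun_eq_iff)
      then show ?thesis using continuous_map_compose[OF c2 c3] by (simp add: o_def)
    qed
    have one: "\<one> \<in> K" using K(1) subgroup.one_closed by blast
    have mu1: "mu \<one> = lam" using gG ka1 by (simp add: mu_def h_def)
    have mu_const: "mu a = lam" if "a \<in> K" for a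
      using const_on[OF K(2) mu_cont _ poly_roots_finite[OF P(1)] one that] mu_root mu1 by simp
    have Einv: "\<forall>k\<in>K. \<forall>u\<in>E. \<rho> k *v u \<in> E"
    proof (intro ballI)
      fix a u assume a: "a \<in> K" and u: "u \<in> E"
      have "\<rho> a *v u \<in> U" using less.prems(4) a u EU by blast
      then show "\<rho> a *v u \<in> E" using key[OF a u] mu_const[OF a] by (simp add: E_def)
    qed
    have comm': "\<forall>a\<in>K. \<forall>b\<in>K. \<forall>u\<in>E. \<rho> (a \<otimes> b \<otimes> inv a \<otimes> inv b) *v u - ka (a \<otimes> b \<otimes> inv a \<otimes> inv b) *s u \<in> Z"
      using less.prems(5) EU by blast
    obtain w where "w \<in> E" "w \<notin> Z" "\<forall>k\<in>K. \<exists>c. \<rho> k *v w - c *s w \<in> Z"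
      using less.hyps[OF dimE Esub ZE ZneE Einv comm'] by blast
    then show ?thesis using EU by blast
  qed
qed


lemma lie_kolchin:
  "\<forall>K. subgroup K G \<longrightarrow> connectedin T K \<longrightarrow> (derived G ^^ d) K = {\<one>} \<longrightarrow>
    (\<forall>Z W. vec.subspace Z \<longrightarrow> vec.subspace W \<longrightarrow> Z \<subseteq> W \<longrightarrow> Z \<noteq> W \<longrightarrow>
      (\<forall>k\<in>K. \<forall>z\<in>Z. \<rho> k *v z \<in> Z) \<longrightarrow> (\<forall>k\<in>K. \<forall>u\<in>W. \<rho> k *v u \<in> W) \<longrightarrow>
      (\<exists>w\<in>W. w \<notin> Z \<and> (\<forall>k\<in>K. \<exists>c. \<rho> k *v w - c *s w \<in> Z)))"
proof (induction d)
  case 0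
  show ?case
  proof (intro allI impI)
    fix K :: "'g set" and Z W :: "(complex^'n) set"
    assume "(derived G ^^ 0) K = {\<one>}" and ZW: "Z \<subseteq> W" "Z \<noteq> W" and Z: "vec.subspace Z"
    then have K1: "K = {\<one>}" by simp
    obtain w where "w \<in> W" "w \<notin> Z" using ZW by blast
    moreover have "\<rho> \<one> *v w - 1 *s w \<in> Z" using vec.subspace_0[OF Z] by simp
    ultimately show "\<exists>w\<in>W. w \<notin> Z \<and> (\<forall>k\<in>K. \<exists>c. \<rho> k *v w - c *s w \<in> Z)"
      using K1 by blast
  qed
next
  case (Suc d)
  show ?case
  proof (intro allI impI)
    fix K :: "'g set" and Z W :: "(complex^'n) set"
    assume K: "subgroup K G" "connectedin T K" and Kd: "(derived G ^^ Suc d) K = {\<one>}"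
      and Z: "vec.subspace Z" and W: "vec.subspace W" and ZW: "Z \<subseteq> W" "Z \<noteq> W"
      and Zinv: "\<forall>k\<in>K. \<forall>z\<in>Z. \<rho> k *v z \<in> Z" and Winv: "\<forall>k\<in>K. \<forall>u\<in>W. \<rho> k *v u \<in> W"
    have KG: "K \<subseteq> carrier G" using K(1) subgroup.subset by blast
    define K' where "K' = derived G K"
    have K'sub: "subgroup K' G" unfolding K'_def using derived_is_subgroup[OF KG] .
    have K'conn: "connectedin T K'" unfolding K'_def using conn_derived[OF K] .
    have K'K: "K' \<subseteq> K" unfolding K'_def using derived_incl[OF _ K(1)] by blast
    have K'd: "(derived G ^^ d) K' = {\<one>}" using Kd unfolding K'_def by (simp add: funpow_swap1)
    have ex: "\<exists>w\<in>W. w \<notin> Z \<and> (\<forall>k\<in>K'. \<exists>c. \<rho> k *v w - c *s w \<in> Z)"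
    proof -
      have Zinv': "\<forall>k\<in>K'. \<forall>z\<in>Z. \<rho> k *v z \<in> Z" using Zinv K'K by blast
      have Winv': "\<forall>k\<in>K'. \<forall>u\<in>W. \<rho> k *v u \<in> W" using Winv K'K by blast
      have IH: "\<forall>k\<in>K'. \<forall>z\<in>Z. \<rho> k *v z \<in> Z \<Longrightarrow> \<forall>k\<in>K'. \<forall>u\<in>W. \<rho> k *v u \<in> W \<Longrightarrow>
          \<exists>w\<in>W. w \<notin> Z \<and> (\<forall>k\<in>K'. \<exists>c. \<rho> k *v w - c *s w \<in> Z)"
        using Suc.IH K'sub K'conn K'd Z W ZW by simp
      show ?thesis using IH[OF Zinv' Winv'] by blast
    qed
    then obtain w where w: "w \<in> W" "w \<notin> Z" "\<forall>k\<in>K'. \<exists>c. \<rho> k *v w - c *s w \<in> Z"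
      by blast
    obtain dd where dd: "\<forall>z\<in>Z. (\<Sum>i\<in>UNIV. z $ i * dd i) = 0" "(\<Sum>i\<in>UNIV. w $ i * dd i) = 1"
      using functional[OF Z w(2)] by blast
    define phi where "phi x = (\<Sum>i\<in>UNIV. x $ i * dd i)" for x :: "complex^'n"
    have phi_diff: "phi (x - c *s y) = phi x - c * phi y" for x y c
      by (simp add: phi_def algebra_simps sum_subtractf sum_distrib_left)
    define ka where "ka k = phi (\<rho> k *v w)" for k
    have ka_cont: "continuous_map T euclidean ka"
    proof -
      have "ka = (\<lambda>a. (\<Sum>i\<in>UNIV. (\<rho> ((\<lambda>x. x) a) *v w) $ i * dd i))"
        by (simp add: ka_def phi_def fun_eq_iff)
      then show ?thesis using cts_fun[OF continuous_map_id[unfolded id_def]] by simp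
    qed
    have eigK': "\<rho> k *v w - ka k *s w \<in> Z" if k: "k \<in> K'" for k
    proof -
      obtain c where c: "\<rho> k *v w - c *s w \<in> Z" using w(3) k by blast
      have "phi (\<rho> k *v w - c *s w) = 0" using dd(1) c unfolding phi_def by blast
      then have "phi (\<rho> k *v w) - c * phi w = 0" by (simp only: phi_diff)
      moreover have "phi w = 1" using dd(2) by (simp add: phi_def)
      ultimately have "ka k = c" by (simp add: ka_def)
      then show ?thesis using c by simp
    qed
    have ka_conj: "ka (inv a \<otimes> k \<otimes> a) = ka k" if k: "k \<in> K'" and a: "a \<in> K" for a k
    proof -
      have kG: "k \<in> carrier G" using k K'K KG by blast
      obtain P where P: "P \<noteq> 0" "\<forall>v. evalv (\<rho> k) P v = 0" using exists_ann by blast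
      define f where "f b = ka (inv b \<otimes> k \<otimes> b)" for b
      have fc: "continuous_map T euclidean f"
      proof -
        have c1: "continuous_map T T (\<lambda>b. inv b \<otimes> k \<otimes> b)"
          by (intro cts_mult cts_inv cts_const continuous_map_id[unfolded id_def] kG)
        have "f = ka \<circ> (\<lambda>b. inv b \<otimes> k \<otimes> b)" by (simp add: f_def fun_eq_iff)
        then show ?thesis using continuous_map_compose[OF c1 ka_cont] by simp
      qed
      have invZk: "invsub (\<rho> k) Z" using Zinv k K'K by (auto simp: invsub_def)
      have froot: "f b \<in> {c. poly P c = 0}" if b: "b \<in> K" for b
      proof -
        have bG: "b \<in> carrier G" using b KG by blast
        have kb: "inv b \<otimes> k \<otimes> b \<in> K'" unfolding K'_def using conj_derived[OF K(1) b] k K'_def by blast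
        have kbG: "inv b \<otimes> k \<otimes> b \<in> carrier G" using kb K'K KG by blast
        have e: "\<rho> (inv b \<otimes> k \<otimes> b) *v w - f b *s w \<in> Z" using eigK'[OF kb] by (simp add: f_def)
        have rel: "\<rho> b *v (\<rho> (inv b \<otimes> k \<otimes> b) *v x) = \<rho> k *v (\<rho> b *v x)" for x
        proof -
          have "b \<otimes> (inv b \<otimes> k \<otimes> b) = k \<otimes> b" using bG kG by (simp add: m_assoc[symmetric])
          then show ?thesis using bG kG kbG by (metis act)
        qed
        have "\<rho> b *v (\<rho> (inv b \<otimes> k \<otimes> b) *v w - f b *s w) \<in> Z" using Zinv b e by blast
        then have e2: "\<rho> k *v (\<rho> b *v w) - f b *s (\<rho> b *v w) \<in> Z"
          by (simp add: vec.diff vec.scale rel)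
        have "inv b \<in> K" by (rule subgroup.m_inv_closed[OF K(1) b])
        have nz: "\<rho> b *v w \<notin> Z"
        proof
          assume "\<rho> b *v w \<in> Z"
          then have "\<rho> (inv b) *v (\<rho> b *v w) \<in> Z" using Zinv \<open>inv b \<in> K\<close> by blast
          then show False using act_inv1[OF bG] w(2) by simp
        qed
        show ?thesis using eigen_mod_root[OF Z invZk e2 nz P(2)] by simp
      qed
      have one: "\<one> \<in> K" using K(1) subgroup.one_closed by blast
      have "f a = f \<one>" by (rule const_on[OF K(2) fc _ poly_roots_finite[OF P(1)] one a]) (use froot in blast)
      then show ?thesis using kG by (simp add: f_def)
    qed
    define Wk where "Wk = {v \<in> W. \<forall>k\<in>K'. \<rho> k *v v - ka k *s v \<in> Z}"
    have Wksub: "vec.subspace Wk"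
      unfolding vec.subspace_def
    proof (intro conjI ballI allI)
      show "0 \<in> Wk" using vec.subspace_0[OF W] vec.subspace_0[OF Z] by (simp add: Wk_def)
    next
      fix x y assume "x \<in> Wk" "y \<in> Wk"
      then have x: "x \<in> W" "\<forall>k\<in>K'. \<rho> k *v x - ka k *s x \<in> Z"
        and y: "y \<in> W" "\<forall>k\<in>K'. \<rho> k *v y - ka k *s y \<in> Z" by (auto simp: Wk_def)
      have "\<rho> k *v (x + y) - ka k *s (x + y) \<in> Z" if k: "k \<in> K'" for k
      proof -
        have eq: "\<rho> k *v (x + y) - ka k *s (x + y) = (\<rho> k *v x - ka k *s x) + (\<rho> k *v y - ka k *s y)"
          by (simp add: matrix_vector_right_distrib vec.scale_right_distrib algebra_simps)
        have "(\<rho> k *v x - ka k *s x) + (\<rho> k *v y - ka k *s y) \<in> Z"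
          using x(2) y(2) k by (intro vec.subspace_add[OF Z]) auto
        then show ?thesis unfolding eq .
      qed
      moreover have "x + y \<in> W" using x(1) y(1) by (rule vec.subspace_add[OF W])
      ultimately show "x + y \<in> Wk" unfolding Wk_def by blast
    next
      fix c x assume "x \<in> Wk"
      then have x: "x \<in> W" "\<forall>k\<in>K'. \<rho> k *v x - ka k *s x \<in> Z" by (auto simp: Wk_def)
      have "\<rho> k *v (c *s x) - ka k *s (c *s x) \<in> Z" if k: "k \<in> K'" for k
      proof -
        have eq: "\<rho> k *v (c *s x) - ka k *s (c *s x) = c *s (\<rho> k *v x - ka k *s x)"
          by (simp add: vec.scale vec.scale_right_diff_distrib vec.scale_left_commute)
        have "c *s (\<rho> k *v x - ka k *s x) \<in> Z" using x(2) k by (intro vec.subspace_scale[OF Z]) auto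
        then show ?thesis unfolding eq .
      qed
      moreover have "c *s x \<in> W" using x(1) by (rule vec.subspace_scale[OF W])
      ultimately show "c *s x \<in> Wk" unfolding Wk_def by blast
    qed
    have ZWk: "Z \<subseteq> Wk"
    proof
      fix z assume z: "z \<in> Z"
      have "\<rho> k *v z - ka k *s z \<in> Z" if "k \<in> K'" for k
        using z that Zinv K'K vec.subspace_diff[OF Z] vec.subspace_scale[OF Z] by blast
      then show "z \<in> Wk" using z ZW(1) by (auto simp: Wk_def)
    qed
    have ZneWk: "Z \<noteq> Wk" using w eigK' by (auto simp: Wk_def)
    have Wkinv: "\<forall>k\<in>K. \<forall>u\<in>Wk. \<rho> k *v u \<in> Wk"
    proof (intro ballI)
      fix a u assume a: "a \<in> K" and u: "u \<in> Wk"
      have aG: "a \<in> carrier G" using a KG by blast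
      have "\<rho> a *v u \<in> W" using Winv a u by (auto simp: Wk_def)
      moreover have "\<rho> k *v (\<rho> a *v u) - ka k *s (\<rho> a *v u) \<in> Z" if k: "k \<in> K'" for k
      proof -
        have kG: "k \<in> carrier G" using k K'K KG by blast
        define k' where "k' = inv a \<otimes> k \<otimes> a"
        have k'K': "k' \<in> K'" unfolding k'_def K'_def using conj_derived[OF K(1) a] k K'_def by blast
        have k'G: "k' \<in> carrier G" using k'K' K'K KG by blast
        have "a \<otimes> k' = k \<otimes> a" using aG kG by (simp add: k'_def m_assoc[symmetric])
        then have rel: "\<rho> a *v (\<rho> k' *v u) = \<rho> k *v (\<rho> a *v u)" using aG kG k'G by (metis act)
        have "\<rho> k' *v u - ka k' *s u \<in> Z" using u k'K' by (auto simp: Wk_def)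
        then have "\<rho> a *v (\<rho> k' *v u - ka k' *s u) \<in> Z" using Zinv a by blast
        moreover have "ka k' = ka k" unfolding k'_def by (rule ka_conj[OF k a])
        ultimately show ?thesis by (simp add: vec.diff vec.scale rel)
      qed
      ultimately show "\<rho> a *v u \<in> Wk" by (simp add: Wk_def)
    qed
    have comm: "\<forall>a\<in>K. \<forall>b\<in>K. \<forall>u\<in>Wk. \<rho> (a \<otimes> b \<otimes> inv a \<otimes> inv b) *v u - ka (a \<otimes> b \<otimes> inv a \<otimes> inv b) *s u \<in> Z"
    proof (intro ballI)
      fix a b u assume a: "a \<in> K" and b: "b \<in> K" and u: "u \<in> Wk"
      have "a \<otimes> b \<otimes> inv a \<otimes> inv b \<in> K'" unfolding K'_def derived_def
        using a b by (intro generate.incl) blast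
      then show "\<rho> (a \<otimes> b \<otimes> inv a \<otimes> inv b) *v u - ka (a \<otimes> b \<otimes> inv a \<otimes> inv b) *s u \<in> Z"
        using u by (auto simp: Wk_def)
    qed
    obtain v where v: "v \<in> Wk" "v \<notin> Z" "\<forall>k\<in>K. \<exists>c. \<rho> k *v v - c *s v \<in> Z"
      using step3[OF K ka_cont Z Zinv Wksub ZWk ZneWk Wkinv comm] by blast
    then show "\<exists>w\<in>W. w \<notin> Z \<and> (\<forall>k\<in>K. \<exists>c. \<rho> k *v w - c *s w \<in> Z)"
      by (auto simp: Wk_def)
  qed
qed

end



context LKctx begin

lemma final:
  assumes solv: "solvable G" and conn: "connected_space T" and V: "vec.subspace V"
    and univ: "\<forall>u. \<exists>g\<in>carrier G. \<rho> g *v u \<in> V"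
  shows "V = UNIV"
proof -
  obtain d where d: "(derived G ^^ d) (carrier G) = {\<one>}"
    using solv solvable_iff_trivial_derived_seq by blast
  have connG: "connectedin T (carrier G)" using conn topT connectedin_topspace by metis
  have LKG: "\<exists>w. w \<notin> Z \<and> (\<forall>g\<in>carrier G. \<exists>c. \<rho> g *v w - c *s w \<in> Z)"
    if Z: "vec.subspace Z" "Z \<noteq> UNIV" "\<forall>g\<in>carrier G. \<forall>z\<in>Z. \<rho> g *v z \<in> Z" for Z
  proof -
    have "\<exists>w\<in>UNIV. w \<notin> Z \<and> (\<forall>k\<in>carrier G. \<exists>c. \<rho> k *v w - c *s w \<in> Z)"
      using lie_kolchin[of d, rule_format, OF subgroup_self connG d Z(1) vec.subspace_UNIV _ Z(2)] Z(3)
      by blast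
    then show ?thesis by blast
  qed
  have main: "vec.subspace Z \<Longrightarrow> (\<forall>g\<in>carrier G. \<forall>z\<in>Z. \<rho> g *v z \<in> Z) \<Longrightarrow> Z \<subseteq> V \<Longrightarrow> V = UNIV" for Z
  proof (induction "CARD('n) - vec.dim Z" arbitrary: Z rule: less_induct)
    case less
    show ?case
    proof (cases "Z = UNIV")
      case True then show ?thesis using less.prems(3) by blast
    next
      case False
      obtain w c0 where w: "w \<notin> Z" "\<forall>g\<in>carrier G. \<exists>c. \<rho> g *v w - c *s w \<in> Z"
        using LKG[OF less.prems(1) False less.prems(2)] by blast
      define Z' where "Z' = {z + t *s w | z t. z \<in> Z}"
      have Z0: "0 \<in> Z" using vec.subspace_0[OF less.prems(1)] .
      have Z'sub: "vec.subspace Z'"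
        unfolding vec.subspace_def
      proof (intro conjI ballI allI)
        have "(0::complex^'n) = 0 + 0 *s w" by simp
        then show "0 \<in> Z'" unfolding Z'_def using Z0 by blast
      next
        fix x y assume "x \<in> Z'" "y \<in> Z'"
        then obtain z1 t1 z2 t2 where "x = z1 + t1 *s w" "y = z2 + t2 *s w" "z1 \<in> Z" "z2 \<in> Z"
          unfolding Z'_def by blast
        moreover have "z1 + t1 *s w + (z2 + t2 *s w) = (z1 + z2) + (t1 + t2) *s w"
          by (simp add: vec.scale_left_distrib algebra_simps)
        ultimately show "x + y \<in> Z'" unfolding Z'_def
          using vec.subspace_add[OF less.prems(1)] by blast
      next
        fix c x assume "x \<in> Z'"
        then obtain z t where "x = z + t *s w" "z \<in> Z" unfolding Z'_def by blast
        moreover have "c *s (z + t *s w) = c *s z + (c * t) *s w"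
          by (simp add: vec.scale_right_distrib vec.scale_scale)
        ultimately show "c *s x \<in> Z'" unfolding Z'_def
          using vec.subspace_scale[OF less.prems(1)] by blast
      qed
      have ZZ': "Z \<subseteq> Z'"
      proof
        fix z assume "z \<in> Z"
        moreover have "z = z + 0 *s w" by simp
        ultimately show "z \<in> Z'" unfolding Z'_def by blast
      qed
      have "w = 0 + 1 *s w" by simp
      then have wZ': "w \<in> Z'" unfolding Z'_def using Z0 by blast
      have Z'inv: "\<forall>g\<in>carrier G. \<forall>z\<in>Z'. \<rho> g *v z \<in> Z'"
      proof (intro ballI)
        fix g x assume g: "g \<in> carrier G" and x: "x \<in> Z'"
        then obtain z t where zt: "x = z + t *s w" "z \<in> Z" unfolding Z'_def by blast
        obtain c where c: "\<rho> g *v w - c *s w \<in> Z" using w(2) g by blast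
        have eq: "\<rho> g *v x = (\<rho> g *v z + t *s (\<rho> g *v w - c *s w)) + (t * c) *s w"
          by (simp add: zt matrix_vector_right_distrib vec.scale vec.scale_right_diff_distrib vec.scale_scale)
        have "\<rho> g *v z + t *s (\<rho> g *v w - c *s w) \<in> Z"
          using less.prems(2) g zt(2) c vec.subspace_add[OF less.prems(1)] vec.subspace_scale[OF less.prems(1)]
          by blast
        then show "\<rho> g *v x \<in> Z'" unfolding eq Z'_def by blast
      qed
      show ?thesis
      proof (cases "Z' \<subseteq> V")
        case True
        have e1: "vec.span Z = Z" using less.prems(1) by (simp only: vec.span_eq_iff)
        have e2: "vec.span Z' = Z'" using Z'sub by (simp only: vec.span_eq_iff)
        have "Z \<subset> Z'" using ZZ' wZ' w(1) by blast
        then have "vec.span Z \<subset> vec.span Z'" by (simp only: e1 e2)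
        then have "vec.dim Z < vec.dim Z'" by (rule vec.dim_psubset)
        moreover have "vec.dim Z' \<le> CARD('n)"
          using vec.dim_subset_UNIV[of Z'] by (simp add: vec.dimension_def card_cart_basis)
        ultimately have "CARD('n) - vec.dim Z' < CARD('n) - vec.dim Z" by linarith
        then show ?thesis using less.hyps Z'sub Z'inv True by blast
      next
        case False
        have wV: "w \<notin> V"
        proof
          assume "w \<in> V"
          have "Z' \<subseteq> V"
          proof
            fix x assume "x \<in> Z'"
            then obtain z t where "x = z + t *s w" "z \<in> Z" unfolding Z'_def by blast
            then show "x \<in> V" using less.prems(3) \<open>w \<in> V\<close> vec.subspace_add[OF V] vec.subspace_scale[OF V]
              by blast
          qed
          then show False using False by blast
        qed
        obtain g where g: "g \<in> carrier G" "\<rho> g *v w \<in> V" using univ by blast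
        obtain c where c: "\<rho> g *v w - c *s w \<in> Z" using w(2) g(1) by blast
        have c0: "c \<noteq> 0"
        proof
          assume "c = 0"
          then have "\<rho> g *v w \<in> Z" using c by simp
          then have "\<rho> (inv g) *v (\<rho> g *v w) \<in> Z" using less.prems(2) g(1) by blast
          then show False using act_inv1[OF g(1)] w(1) by simp
        qed
        have "\<rho> g *v w - (\<rho> g *v w - c *s w) \<in> V"
          using g(2) c less.prems(3) vec.subspace_diff[OF V] by blast
        then have "c *s w \<in> V" by simp
        then have "(1 / c) *s (c *s w) \<in> V" by (rule vec.subspace_scale[OF V])
        moreover have "(1 / c) * c = 1" using c0 by simp
        ultimately have "w \<in> V" by (simp only: vec.scale_scale vec.scale_one)
        then show ?thesis using wV by blast
      qed
    qed
  qed
  show ?thesis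
    by (rule main[of "{0}"]) (auto simp: vec.subspace_def vec.subspace_0[OF V])
qed

end

theorem proposition5p1:
  fixes G :: "('g, 'b) monoid_scheme" and T :: "'g topology"
    and \<rho> :: "'g \<Rightarrow> complex^'n^'n" and V :: "(complex^'n) set"
  assumes "topological_group G T"
    and "connected_space T"
    and "solvable G"
    and "\<rho> \<in> hom G GL"
    and "continuous_map T euclidean \<rho>"
    and "vec.subspace V"
    and "universal_in G \<rho> UNIV V"
  shows "V = UNIV"
proof -
  have grp: "group G" using assms(1) by (simp add: topological_group_def)
  interpret LKctx G T \<rho>
    by (rule LKctx.intro[OF grp LKctx_axioms.intro[OF assms(1,4,5)]])
  show ?thesis
    using final[OF assms(3,2,6)] assms(7) by (simp add: universal_in_def)
qed


end
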